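(* Let $F$ be a finite group acting faithfully and transitively on an alphabet $\{0,\dots,q-1\}$, and let $\mathbb{T}$ be the $(q+1)$-regular tree. Then the discrete affine group $\mathrm{DA}_F(\mathbb{T})$ does not have Shalom's property $H_{\mathrm{FD}}$.
   Context: Fix an end of $\mathbb{T}$, a bi-infinite ray in $\mathbb{T}$ converging to this end, and a vertex $v$ on this ray. Removing $v$ leaves $q$ subtrees not containing the end; identify them with the alphabet $\{0,\dots,q-1\}$. The discrete affine group $\mathrm{DA}_F(\mathbb{T})$ is the group of automorphisms of $\mathbb{T}$ generated by an automorphism $t$ that translates along the ray (fixing the chosen end) together with the automorphisms permuting these $q$ subtrees according to the action of $F$. A finitely generated group has property $H_{\mathrm{FD}}$ if every unitary representation with nonzero first reduced cohomology (1-cocycles modulo the closure, for pointwise convergence, of 1-coboundaries) admits a nonzero finite-dimensional subrepresentation. *)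

theory Defs
  imports "HOL-Analysis.Analysis" "HOL-Algebra.Group_Action" "HOL-Algebra.Generated_Groups"
begin

text \<open>Vertices are pairs (n, y): n is the horocyclic level and y encodes the digits
  y k (k < n) in the alphabet {0..<q}; y vanishes for k >= n and for k sufficiently
  negative.  The parent of (n, y) is (n - 1, y with digit n - 1 erased), its q children are
  (n + 1, y(n := a)) for a < q.  The fixed end is the direction n -> -infinity, the
  bi-infinite ray is {(n, 0) | n}, and the vertex v is (0, 0).  The q subtrees of the tree
  minus v not containing the end are indexed by the digit y 0.\<close>

type_synonym vert = "int \<times> (int \<Rightarrow> nat)"

definition tree_V :: "nat \<Rightarrow> vert set" where
  "tree_V q = {(n, y). (\<forall>k. y k < q) \<and> (\<forall>k. n \<le> k \<longrightarrow> y k = 0) \<and> (\<exists>N. \<forall>k<N. y k = 0)}"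

definition tree_adj :: "nat \<Rightarrow> vert \<Rightarrow> vert \<Rightarrow> bool" where
  "tree_adj q u w \<longleftrightarrow> u \<in> tree_V q \<and> w \<in> tree_V q \<and>
     ((fst w = fst u + 1 \<and> (\<forall>k < fst u. snd w k = snd u k)) \<or>
      (fst u = fst w + 1 \<and> (\<forall>k < fst w. snd u k = snd w k)))"

definition tree_ray :: "int \<Rightarrow> vert" where
  "tree_ray n = (n, \<lambda>_. 0)"

definition tree_v :: vert where
  "tree_v = tree_ray 0"

definition shift_t :: "vert \<Rightarrow> vert" where
  "shift_t x = (fst x + 1, \<lambda>k. snd x (k - 1))"

definition subtree_below_v :: "nat \<Rightarrow> nat \<Rightarrow> vert set" where
  "subtree_below_v q a = {(n, y) \<in> tree_V q. 1 \<le> n \<and> (\<forall>k<0. y k = 0) \<and> y 0 = a}"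

definition perm_below_v :: "nat \<Rightarrow> (nat \<Rightarrow> nat) \<Rightarrow> vert \<Rightarrow> vert" where
  "perm_below_v q p x =
     (if \<exists>a<q. x \<in> subtree_below_v q a then (fst x, (snd x)(0 := p (snd x 0))) else x)"

definition DA :: "nat \<Rightarrow> ('f, 'c) monoid_scheme \<Rightarrow> ('f \<Rightarrow> nat \<Rightarrow> nat) \<Rightarrow> (vert \<Rightarrow> vert) monoid" where
  "DA q F \<phi> = subgroup_generated (BijGroup (tree_V q))
      (insert (restrict shift_t (tree_V q))
         ((\<lambda>g. restrict (perm_below_v q (\<phi> g)) (tree_V q)) ` carrier F))"

definition ell2 :: "(nat \<Rightarrow> complex) set" where
  "ell2 = {x. summable (\<lambda>n. (cmod (x n))\<^sup>2)}"

definition l2inner :: "(nat \<Rightarrow> complex) \<Rightarrow> (nat \<Rightarrow> complex) \<Rightarrow> complex" where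
  "l2inner x y = (\<Sum>n. x n * cnj (y n))"

definition l2norm :: "(nat \<Rightarrow> complex) \<Rightarrow> real" where
  "l2norm x = sqrt (\<Sum>n. (cmod (x n))\<^sup>2)"

definition vadd :: "(nat \<Rightarrow> complex) \<Rightarrow> (nat \<Rightarrow> complex) \<Rightarrow> (nat \<Rightarrow> complex)" where
  "vadd x y = (\<lambda>n. x n + y n)"

definition vsub :: "(nat \<Rightarrow> complex) \<Rightarrow> (nat \<Rightarrow> complex) \<Rightarrow> (nat \<Rightarrow> complex)" where
  "vsub x y = (\<lambda>n. x n - y n)"

definition vscale :: "complex \<Rightarrow> (nat \<Rightarrow> complex) \<Rightarrow> (nat \<Rightarrow> complex)" where
  "vscale c x = (\<lambda>n. c * x n)"

definition unitary_op :: "((nat \<Rightarrow> complex) \<Rightarrow> (nat \<Rightarrow> complex)) \<Rightarrow> bool" where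
  "unitary_op U \<longleftrightarrow> U ` ell2 = ell2 \<and>
     (\<forall>x\<in>ell2. \<forall>y\<in>ell2. U (vadd x y) = vadd (U x) (U y)) \<and>
     (\<forall>c. \<forall>x\<in>ell2. U (vscale c x) = vscale c (U x)) \<and>
     (\<forall>x\<in>ell2. \<forall>y\<in>ell2. l2inner (U x) (U y) = l2inner x y)"

definition unitary_rep ::
  "('a, 'b) monoid_scheme \<Rightarrow> ('a \<Rightarrow> (nat \<Rightarrow> complex) \<Rightarrow> (nat \<Rightarrow> complex)) \<Rightarrow> bool" where
  "unitary_rep G \<pi> \<longleftrightarrow> (\<forall>g\<in>carrier G. unitary_op (\<pi> g)) \<and>
     (\<forall>g\<in>carrier G. \<forall>h\<in>carrier G. \<forall>x\<in>ell2. \<pi> (g \<otimes>\<^bsub>G\<^esub> h) x = \<pi> g (\<pi> h x)) \<and>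
     (\<forall>x\<in>ell2. \<pi> \<one>\<^bsub>G\<^esub> x = x)"

definition cocycle ::
  "('a, 'b) monoid_scheme \<Rightarrow> ('a \<Rightarrow> (nat \<Rightarrow> complex) \<Rightarrow> (nat \<Rightarrow> complex)) \<Rightarrow> ('a \<Rightarrow> (nat \<Rightarrow> complex)) \<Rightarrow> bool" where
  "cocycle G \<pi> b \<longleftrightarrow> (\<forall>g\<in>carrier G. b g \<in> ell2) \<and>
     (\<forall>g\<in>carrier G. \<forall>h\<in>carrier G. b (g \<otimes>\<^bsub>G\<^esub> h) = vadd (b g) (\<pi> g (b h)))"

text \<open>b lies in the closure, for the topology of pointwise convergence on G, of the space
  of coboundaries g |-> pi g xi - xi.\<close>
definition in_closure_coboundaries ::
  "('a, 'b) monoid_scheme \<Rightarrow> ('a \<Rightarrow> (nat \<Rightarrow> complex) \<Rightarrow> (nat \<Rightarrow> complex)) \<Rightarrow> ('a \<Rightarrow> (nat \<Rightarrow> complex)) \<Rightarrow> bool" where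
  "in_closure_coboundaries G \<pi> b \<longleftrightarrow>
     (\<forall>S e. finite S \<and> S \<subseteq> carrier G \<and> e > 0 \<longrightarrow>
        (\<exists>\<xi>\<in>ell2. \<forall>g\<in>S. l2norm (vsub (b g) (vsub (\<pi> g \<xi>) \<xi>)) < e))"

definition nonzero_reduced_H1 ::
  "('a, 'b) monoid_scheme \<Rightarrow> ('a \<Rightarrow> (nat \<Rightarrow> complex) \<Rightarrow> (nat \<Rightarrow> complex)) \<Rightarrow> bool" where
  "nonzero_reduced_H1 G \<pi> \<longleftrightarrow> (\<exists>b. cocycle G \<pi> b \<and> \<not> in_closure_coboundaries G \<pi> b)"

definition cspan :: "(nat \<Rightarrow> complex) set \<Rightarrow> (nat \<Rightarrow> complex) set" where
  "cspan S = {x. \<exists>c. x = (\<lambda>n. \<Sum>v\<in>S. c v * v n)}"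

definition has_fd_subrep ::
  "('a, 'b) monoid_scheme \<Rightarrow> ('a \<Rightarrow> (nat \<Rightarrow> complex) \<Rightarrow> (nat \<Rightarrow> complex)) \<Rightarrow> bool" where
  "has_fd_subrep G \<pi> \<longleftrightarrow> (\<exists>S. finite S \<and> S \<subseteq> ell2 \<and> cspan S \<noteq> {\<lambda>_. 0} \<and>
     (\<forall>g\<in>carrier G. \<forall>x\<in>cspan S. \<pi> g x \<in> cspan S))"

text \<open>Shalom's property H_FD (tested on unitary representations on the separable
  Hilbert space l2(N)).\<close>
definition property_HFD :: "('a, 'b) monoid_scheme \<Rightarrow> bool" where
  "property_HFD G \<longleftrightarrow>
     (\<forall>\<pi>. unitary_rep G \<pi> \<and> nonzero_reduced_H1 G \<pi> \<longrightarrow> has_fd_subrep G \<pi>)"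

end

theory Submission
  imports Defs "HOL-Library.Function_Algebras"
begin

definition Yq :: "nat \<Rightarrow> (int \<Rightarrow> nat) set" where
  "Yq q = {y. (\<forall>k. y k < q) \<and> finite {k. y k \<noteq> 0}}"

definition xn :: "(int \<Rightarrow> nat) \<Rightarrow> int \<Rightarrow> vert" where
  "xn y n = (n, \<lambda>k. if k < n then y k else 0)"

definition ray :: "(int \<Rightarrow> nat) \<Rightarrow> vert set" where
  "ray y = range (xn y)"

definition Xs :: "nat \<Rightarrow> vert set set" where
  "Xs q = ray ` Yq q"

definition shy :: "int \<Rightarrow> (int \<Rightarrow> nat) \<Rightarrow> (int \<Rightarrow> nat)" where
  "shy d y = (\<lambda>k. y (k + d))"

definition sig :: "(nat \<Rightarrow> nat) \<Rightarrow> (int \<Rightarrow> nat) \<Rightarrow> (int \<Rightarrow> nat)" where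
  "sig p y = (if \<forall>k<0. y k = 0 then y(0 := p (y 0)) else y)"

definition Mx :: "(int \<Rightarrow> nat) \<Rightarrow> int" where
  "Mx y = (if {k. y k \<noteq> 0} = {} then 0 else Max {k. y k \<noteq> 0})"

lemma finite_bdd_below_int:
  fixes A :: "int set" assumes "finite A" shows "\<exists>N. \<forall>k<N. k \<notin> A"
proof (cases "A = {}")
  case True then show ?thesis by auto
next
  case False
  then show ?thesis using assms by (intro exI[of _ "Min A"]) (auto dest: Min_le)
qed

lemma ray_sub: assumes "y \<in> Yq q" shows "ray y \<subseteq> tree_V q"
proof -
  have q: "0 < q" using assms by (auto simp: Yq_def intro: le_less_trans[OF le0])
  obtain N where N: "\<forall>k<N. y k = 0"
    using finite_bdd_below_int[of "{k. y k \<noteq> 0}"] assms by (auto simp: Yq_def)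
  have "xn y n \<in> tree_V q" for n
  proof -
    show ?thesis using assms q N unfolding xn_def tree_V_def Yq_def by (auto intro!: exI[of _ N])
  qed
  then show ?thesis unfolding ray_def by auto
qed

lemma xn_in: "y \<in> Yq q \<Longrightarrow> xn y n \<in> tree_V q"
  using ray_sub[of y q] unfolding ray_def by auto

lemma ray_inj: assumes "ray y = ray y'" shows "y = y'"
proof
  fix k
  have "xn y (k+1) \<in> ray y'" using assms unfolding ray_def by auto
  then obtain n where "xn y (k+1) = xn y' n" unfolding ray_def by auto
  then have "n = k + 1" and "(\<lambda>j. if j < k+1 then y j else 0) = (\<lambda>j. if j < k+1 then y' j else 0)"
    unfolding xn_def by auto
  then show "y k = y' k" by (metis less_add_one)
qed

lemma shy_Yq: "y \<in> Yq q \<Longrightarrow> shy d y \<in> Yq q"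
proof -
  assume y: "y \<in> Yq q"
  have "{k. shy d y k \<noteq> 0} = (\<lambda>k. k - d) ` {k. y k \<noteq> 0}"
    unfolding shy_def by (auto simp: image_iff intro!: exI[of _ "_ + d"])
  then show ?thesis using y unfolding Yq_def shy_def by auto
qed

lemma shy_shy[simp]: "shy a (shy b y) = shy (a + b) y"
  unfolding shy_def by (simp add: fun_eq_iff ac_simps)

lemma shy_0[simp]: "shy 0 y = y" unfolding shy_def by simp

lemma sig_Yq: assumes "y \<in> Yq q" "\<forall>a<q. p a < q" shows "sig p y \<in> Yq q"
proof -
  have "{k. sig p y k \<noteq> 0} \<subseteq> insert 0 {k. y k \<noteq> 0}" unfolding sig_def by auto
  then have "finite {k. sig p y k \<noteq> 0}" using assms(1) unfolding Yq_def
    by (metis (no_types, lifting) finite_insert finite_subset mem_Collect_eq)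
  moreover have "sig p y k < q" for k using assms unfolding Yq_def sig_def by auto
  ultimately show ?thesis unfolding Yq_def by auto
qed

lemma shift_xn: "shift_t (xn y n) = xn (shy (-1) y) (n + 1)"
  unfolding shift_t_def xn_def shy_def by (auto simp: fun_eq_iff)

lemma shift_ray: "shift_t ` ray y = ray (shy (-1) y)"
proof -
  have "shift_t ` ray y = (\<lambda>n. xn (shy (-1) y) (n+1)) ` UNIV"
    unfolding ray_def by (auto simp: shift_xn image_iff)
  also have "\<dots> = ray (shy (-1) y)" unfolding ray_def
    by (auto simp: image_iff intro!: exI[of _ "_ - 1"])
  finally show ?thesis .
qed

lemma perm_xn: assumes "y \<in> Yq q"
  shows "perm_below_v q p (xn y n) = xn (sig p y) n"
proof -
  have yq: "\<forall>k. y k < q" using assms by (auto simp: Yq_def)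
  have V: "xn y n \<in> tree_V q" using xn_in[OF assms] .
  have cond: "(\<exists>a<q. xn y n \<in> subtree_below_v q a) \<longleftrightarrow> (1 \<le> n \<and> (\<forall>k<0. y k = 0))"
    using V yq unfolding subtree_below_v_def xn_def by auto
  show ?thesis
  proof (cases "1 \<le> n \<and> (\<forall>k<0. y k = 0)")
    case True
    then show ?thesis using cond unfolding perm_below_v_def
      by (auto simp: xn_def sig_def fun_eq_iff)
  next
    case False
    then show ?thesis using cond unfolding perm_below_v_def
      by (auto simp: xn_def sig_def fun_eq_iff)
  qed
qed

lemma perm_ray: assumes "y \<in> Yq q"
  shows "perm_below_v q p ` ray y = ray (sig p y)"
  unfolding ray_def using perm_xn[OF assms] by (auto simp: image_iff)


lemma restrict_img: "B \<subseteq> A \<Longrightarrow> restrict f A ` B = f ` B"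
  by (auto simp: subset_iff image_iff)

lemma Xs_sub: "A \<in> Xs q \<Longrightarrow> A \<subseteq> tree_V q"
  unfolding Xs_def using ray_sub by auto

lemma shift_V: "x \<in> tree_V q \<Longrightarrow> shift_t x \<in> tree_V q"
proof -
  assume x: "x \<in> tree_V q"
  obtain n y where xy: "x = (n, y)" by (cases x)
  from x xy obtain N where N: "\<forall>k<N. y k = 0" unfolding tree_V_def by auto
  have "\<forall>k<N+1. y (k - 1) = 0" using N by auto
  then show ?thesis using x xy unfolding tree_V_def shift_t_def by (auto intro!: exI[of _ "N+1"])
qed

definition unshift :: "vert \<Rightarrow> vert" where
  "unshift x = (fst x - 1, \<lambda>k. snd x (k + 1))"

lemma unshift_V: "x \<in> tree_V q \<Longrightarrow> unshift x \<in> tree_V q"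
proof -
  assume x: "x \<in> tree_V q"
  obtain n y where xy: "x = (n, y)" by (cases x)
  from x xy obtain N where N: "\<forall>k<N. y k = 0" unfolding tree_V_def by auto
  have "\<forall>k<N-1. y (k + 1) = 0" using N by auto
  then show ?thesis using x xy unfolding tree_V_def unshift_def by (auto intro!: exI[of _ "N-1"])
qed

lemma tt_Bij: "restrict shift_t (tree_V q) \<in> Bij (tree_V q)"
proof -
  have "bij_betw shift_t (tree_V q) (tree_V q)"
  proof (rule bij_betw_byWitness[where f' = unshift])
    show "\<forall>a\<in>tree_V q. unshift (shift_t a) = a" by (simp add: shift_t_def unshift_def)
    show "\<forall>a'\<in>tree_V q. shift_t (unshift a') = a'" by (simp add: shift_t_def unshift_def)
    show "shift_t ` tree_V q \<subseteq> tree_V q" using shift_V by blast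
    show "unshift ` tree_V q \<subseteq> tree_V q" using unshift_V by blast
  qed
  then show ?thesis unfolding Bij_def by (simp add: bij_betw_restrict_eq)
qed

lemma perm_V: assumes p: "\<forall>a<q. p a < q" and x: "x \<in> tree_V q"
  shows "perm_below_v q p x \<in> tree_V q"
proof (cases "\<exists>a<q. x \<in> subtree_below_v q a")
  case True
  obtain n y where xy: "x = (n, y)" by (cases x)
  from x xy obtain N where N: "\<forall>k<N. y k = 0" unfolding tree_V_def by auto
  from True xy have n1: "1 \<le> n" unfolding subtree_below_v_def by auto
  have "\<forall>k<min N 0. (y(0 := p (y 0))) k = 0" using N by auto
  then show ?thesis using True x xy p n1 unfolding perm_below_v_def tree_V_def
    by (auto intro!: exI[of _ "min N 0"])
next
  case False then show ?thesis using x unfolding perm_below_v_def by (subst if_not_P[OF False]) simp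
qed

lemma perm_perm: assumes p: "\<forall>a<q. p a < q" and p': "\<forall>a<q. p' (p a) = a"
  and x: "x \<in> tree_V q"
  shows "perm_below_v q p' (perm_below_v q p x) = x"
proof (cases "\<exists>a<q. x \<in> subtree_below_v q a")
  case True
  obtain n y where xy: "x = (n, y)" by (cases x)
  have y0: "y 0 < q" using x xy unfolding tree_V_def by auto
  have "perm_below_v q p x = (n, y(0 := p (y 0)))" using True xy unfolding perm_below_v_def by auto
  moreover have "(n, y(0 := p (y 0))) \<in> subtree_below_v q (p (y 0))"
    using True xy perm_V[OF p x] \<open>perm_below_v q p x = (n, y(0 := p (y 0)))\<close>
    unfolding subtree_below_v_def by auto
  ultimately show ?thesis using xy y0 p p' unfolding perm_below_v_def
    by (auto simp: fun_eq_iff)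
next
  case False
  have h: "perm_below_v q p x = x" unfolding perm_below_v_def by (rule if_not_P[OF False])
  have h': "perm_below_v q p' x = x" unfolding perm_below_v_def by (rule if_not_P[OF False])
  show ?thesis by (simp only: h h')
qed

lemma ss_Bij: assumes "bij_betw p {..<q} {..<q}"
  shows "restrict (perm_below_v q p) (tree_V q) \<in> Bij (tree_V q)"
proof -
  define p' where "p' = inv_into {..<q} p"
  have p: "\<forall>a<q. p a < q" using assms by (auto dest: bij_betwE)
  have p': "\<forall>a<q. p' a < q" unfolding p'_def
    using assms by (metis bij_betw_def inv_into_into lessThan_iff)
  have pp': "\<forall>a<q. p' (p a) = a" unfolding p'_def using assms
    by (simp add: bij_betw_def)
  have p'p: "\<forall>a<q. p (p' a) = a" unfolding p'_def using assms
    by (simp add: bij_betw_def f_inv_into_f)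
  have "bij_betw (perm_below_v q p) (tree_V q) (tree_V q)"
    by (rule bij_betw_byWitness[where f' = "perm_below_v q p'"])
       (auto simp: perm_V perm_perm p p' pp' p'p)
  then show ?thesis unfolding Bij_def by (simp add: bij_betw_restrict_eq)
qed

lemma sig_inv: assumes "bij_betw p {..<q} {..<q}" "y \<in> Yq q"
  shows "sig p (sig (inv_into {..<q} p) y) = y"
proof -
  have y0: "y 0 < q" using assms(2) unfolding Yq_def by auto
  have "p (inv_into {..<q} p (y 0)) = y 0" using assms(1) y0
    by (simp add: bij_betw_def f_inv_into_f)
  then show ?thesis unfolding sig_def by (auto simp: fun_eq_iff)
qed

definition good :: "nat \<Rightarrow> (vert \<Rightarrow> vert) \<Rightarrow> bool" where
  "good q g \<longleftrightarrow> g \<in> Bij (tree_V q) \<and> (\<exists>c. \<forall>x\<in>tree_V q. fst (g x) = fst x + c) \<and>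
     (\<forall>A\<in>Xs q. g ` A \<in> Xs q) \<and> (\<forall>A\<in>Xs q. \<exists>B\<in>Xs q. g ` B = A)"

lemma good_tt: "good q (restrict shift_t (tree_V q))"
proof -
  have img: "restrict shift_t (tree_V q) ` ray y = ray (shy (-1) y)" if "y \<in> Yq q" for y
    by (rule trans[OF restrict_img[OF ray_sub[OF that]] shift_ray])
  have "\<forall>A\<in>Xs q. restrict shift_t (tree_V q) ` A \<in> Xs q"
    unfolding Xs_def using img shy_Yq by auto
  moreover have "\<forall>A\<in>Xs q. \<exists>B\<in>Xs q. restrict shift_t (tree_V q) ` B = A"
  proof
    fix A assume "A \<in> Xs q"
    then obtain y where y: "y \<in> Yq q" "A = ray y" unfolding Xs_def by auto
    have "restrict shift_t (tree_V q) ` ray (shy 1 y) = A" using img[OF shy_Yq[OF y(1)]] y by simp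
    then show "\<exists>B\<in>Xs q. restrict shift_t (tree_V q) ` B = A"
      using shy_Yq[OF y(1)] unfolding Xs_def by blast
  qed
  moreover have "\<forall>x\<in>tree_V q. fst (restrict shift_t (tree_V q) x) = fst x + 1"
    by (simp add: shift_t_def)
  ultimately show ?thesis unfolding good_def using tt_Bij by blast
qed

lemma good_ss: assumes "bij_betw p {..<q} {..<q}"
  shows "good q (restrict (perm_below_v q p) (tree_V q))"
proof -
  have p: "\<forall>a<q. p a < q" using assms by (auto dest: bij_betwE)
  have p': "\<forall>a<q. inv_into {..<q} p a < q"
    using assms by (metis bij_betw_def inv_into_into lessThan_iff)
  have img: "restrict (perm_below_v q p) (tree_V q) ` ray y = ray (sig p y)" if "y \<in> Yq q" for y
    by (rule trans[OF restrict_img[OF ray_sub[OF that]] perm_ray[OF that]])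
  have "\<forall>A\<in>Xs q. restrict (perm_below_v q p) (tree_V q) ` A \<in> Xs q"
    unfolding Xs_def using img sig_Yq p by auto
  moreover have "\<forall>A\<in>Xs q. \<exists>B\<in>Xs q. restrict (perm_below_v q p) (tree_V q) ` B = A"
  proof
    fix A assume "A \<in> Xs q"
    then obtain y where y: "y \<in> Yq q" "A = ray y" unfolding Xs_def by auto
    have Y': "sig (inv_into {..<q} p) y \<in> Yq q" using sig_Yq[OF y(1) p'] .
    have "restrict (perm_below_v q p) (tree_V q) ` ray (sig (inv_into {..<q} p) y) = A"
      using img[OF Y'] y sig_inv[OF assms y(1)] by simp
    then show "\<exists>B\<in>Xs q. restrict (perm_below_v q p) (tree_V q) ` B = A"
      using Y' unfolding Xs_def by blast
  qed
  moreover have "\<forall>x\<in>tree_V q. fst (restrict (perm_below_v q p) (tree_V q) x) = fst x + 0"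
    by (simp add: perm_below_v_def)
  ultimately show ?thesis unfolding good_def using ss_Bij[OF assms] by blast
qed

lemma inv_img: assumes "g \<in> Bij V" "B \<subseteq> V"
  shows "restrict (inv_into V g) V ` (g ` B) = B"
proof -
  have "inj_on g V" "g ` V = V" using assms(1) unfolding Bij_def bij_betw_def by auto
  then have "\<forall>b\<in>B. restrict (inv_into V g) V (g b) = b" using assms(2)
    by (metis image_eqI inv_into_f_f restrict_apply' subsetD)
  then have "restrict (inv_into V g) V ` (g ` B) = (\<lambda>b. b) ` B"
    unfolding image_image by (intro image_cong) auto
  then show ?thesis by simp
qed

lemma good_inv: assumes "good q g" shows "good q (restrict (inv_into (tree_V q) g) (tree_V q))"
proof -
  let ?V = "tree_V q" let ?h = "restrict (inv_into ?V g) ?V"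
  have gB: "g \<in> Bij ?V" using assms unfolding good_def by auto
  obtain c where c: "\<forall>x\<in>?V. fst (g x) = fst x + c" using assms unfolding good_def by auto
  have bij: "bij_betw g ?V ?V" using gB unfolding Bij_def by auto
  have hB: "?h \<in> Bij ?V" using restrict_inv_into_Bij[OF gB] .
  have lev: "\<forall>x\<in>?V. fst (?h x) = fst x + (-c)"
  proof
    fix x assume x: "x \<in> ?V"
    have "inv_into ?V g x \<in> ?V" "g (inv_into ?V g x) = x"
      using bij x by (auto simp: bij_betw_def inv_into_into f_inv_into_f)
    then show "fst (?h x) = fst x + (-c)" using c x by force
  qed
  have i1: "\<forall>A\<in>Xs q. ?h ` A \<in> Xs q"
  proof
    fix A assume A: "A \<in> Xs q"
    then obtain B where B: "B \<in> Xs q" "g ` B = A" using assms unfolding good_def by auto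
    then show "?h ` A \<in> Xs q" using inv_img[OF gB Xs_sub[OF B(1)]] by simp
  qed
  have i2: "\<forall>A\<in>Xs q. \<exists>B\<in>Xs q. ?h ` B = A"
  proof
    fix A assume A: "A \<in> Xs q"
    then have "g ` A \<in> Xs q" using assms unfolding good_def by auto
    then show "\<exists>B\<in>Xs q. ?h ` B = A" using inv_img[OF gB Xs_sub[OF A]] by blast
  qed
  show ?thesis unfolding good_def using hB lev i1 i2 by blast
qed

lemma compose_img: "A \<subseteq> V \<Longrightarrow> compose V g h ` A = g ` h ` A"
  unfolding compose_def by (auto simp: image_iff subsetD)

lemma good_mult: assumes "good q g" "good q h" shows "good q (compose (tree_V q) g h)"
proof -
  let ?V = "tree_V q"
  have gB: "g \<in> Bij ?V" and hB: "h \<in> Bij ?V" using assms unfolding good_def by auto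
  obtain c where c: "\<forall>x\<in>?V. fst (g x) = fst x + c" using assms unfolding good_def by auto
  obtain d where d: "\<forall>x\<in>?V. fst (h x) = fst x + d" using assms unfolding good_def by auto
  have hV: "\<forall>x\<in>?V. h x \<in> ?V" using hB unfolding Bij_def bij_betw_def by auto
  have lev: "\<forall>x\<in>?V. fst (compose ?V g h x) = fst x + (d + c)"
    using c d hV unfolding compose_def by auto
  have i1: "\<forall>A\<in>Xs q. compose ?V g h ` A \<in> Xs q"
  proof
    fix A assume A: "A \<in> Xs q"
    have "h ` A \<in> Xs q" using assms(2) A unfolding good_def by blast
    then have "g ` h ` A \<in> Xs q" using assms(1) unfolding good_def by blast
    then show "compose ?V g h ` A \<in> Xs q" by (subst compose_img[OF Xs_sub[OF A]]) assumption
  qed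
  have i2: "\<forall>A\<in>Xs q. \<exists>B\<in>Xs q. compose ?V g h ` B = A"
  proof
    fix A assume A: "A \<in> Xs q"
    obtain B where B: "B \<in> Xs q" "g ` B = A" using assms(1) A unfolding good_def by auto
    obtain C where C: "C \<in> Xs q" "h ` C = B" using assms(2) B(1) unfolding good_def by auto
    have "compose ?V g h ` C = g ` h ` C" by (rule compose_img[OF Xs_sub[OF C(1)]])
    also have "\<dots> = A" using B C by simp
    finally have "compose ?V g h ` C = A" .
    then show "\<exists>B\<in>Xs q. compose ?V g h ` B = A" using C(1) by blast
  qed
  show ?thesis unfolding good_def using compose_Bij[OF gB hB] lev i1 i2 by blast
qed

lemma good_one: "good q (\<lambda>x\<in>tree_V q. x)"
proof -
  have im: "\<forall>A\<in>Xs q. (\<lambda>x\<in>tree_V q. x) ` A = A"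
    using Xs_sub by auto
  have "\<forall>x\<in>tree_V q. fst ((\<lambda>x\<in>tree_V q. x) x) = fst x + 0" by simp
  then have "\<exists>c. \<forall>x\<in>tree_V q. fst ((\<lambda>x\<in>tree_V q. x) x) = fst x + c" by blast
  moreover have "\<forall>A\<in>Xs q. \<exists>B\<in>Xs q. (\<lambda>x\<in>tree_V q. x) ` B = A" using im by blast
  moreover have "\<forall>A\<in>Xs q. (\<lambda>x\<in>tree_V q. x) ` A \<in> Xs q" using im by simp
  ultimately show ?thesis unfolding good_def using id_Bij[of "tree_V q"] by blast
qed

lemma DA_carrier: "carrier (DA q F \<phi>) = generate (BijGroup (tree_V q))
   (carrier (BijGroup (tree_V q)) \<inter> insert (restrict shift_t (tree_V q))
         ((\<lambda>g. restrict (perm_below_v q (\<phi> g)) (tree_V q)) ` carrier F))"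
  unfolding DA_def by (simp add: carrier_subgroup_generated)

lemma DA_mult: "mult (DA q F \<phi>) = mult (BijGroup (tree_V q))"
  and DA_one: "one (DA q F \<phi>) = one (BijGroup (tree_V q))"
  unfolding DA_def subgroup_generated_def by auto

lemma BijGroup_one: "one (BijGroup S) = (\<lambda>x\<in>S. x)"
  by (simp add: BijGroup_def)

lemma BijGroup_mult: "f \<in> Bij S \<Longrightarrow> g \<in> Bij S \<Longrightarrow> f \<otimes>\<^bsub>BijGroup S\<^esub> g = compose S f g"
  by (simp add: BijGroup_def)

lemma good_Bij: "good q g \<Longrightarrow> g \<in> Bij (tree_V q)"
  unfolding good_def by blast

lemma DA_good: assumes bijp: "\<forall>g\<in>carrier F. bij_betw (\<phi> g) {..<q} {..<q}"
  and g: "g \<in> carrier (DA q F \<phi>)" shows "good q g"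
  using g unfolding DA_carrier
proof (induction rule: generate.induct)
  case one
  then show ?case by (simp only: BijGroup_one good_one)
next
  case (incl h)
  then show ?case using good_tt good_ss bijp by auto
next
  case (inv h)
  then have hh: "good q h" using good_tt good_ss bijp by auto
  have eq: "inv\<^bsub>BijGroup (tree_V q)\<^esub> h = restrict (inv_into (tree_V q) h) (tree_V q)"
    by (rule inv_BijGroup[OF good_Bij[OF hh]])
  show ?case unfolding eq by (rule good_inv[OF hh])
next
  case (eng h1 h2)
  then show ?case using good_mult by (simp add: BijGroup_mult good_Bij)
qed

lemma DA_subgroup: "subgroup (carrier (DA q F \<phi>)) (BijGroup (tree_V q))"
  unfolding DA_carrier by (rule group.generate_is_subgroup[OF group_BijGroup]) auto



section \<open>l2 lemmas\<close>

lemma reindex_suminf: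
  fixes f :: "nat \<Rightarrow> 'a::banach"
  assumes bij: "bij p" and s: "summable (\<lambda>n. norm (f n))"
  shows "summable (\<lambda>n. norm (f (p n)))" and "(\<Sum>n. f (p n)) = (\<Sum>n. f n)"
proof -
  have bb: "bij_betw p UNIV UNIV" using bij by (simp add: bij_def)
  have h: "(f has_sum suminf f) UNIV"
    by (rule norm_summable_imp_has_sum[OF s summable_sums[OF summable_norm_cancel[OF s]]])
  have h2: "((\<lambda>n. f (p n)) has_sum suminf f) UNIV"
    using has_sum_reindex_bij_betw[OF bb, of f] h by simp
  then show "(\<Sum>n. f (p n)) = (\<Sum>n. f n)" using has_sum_imp_sums sums_unique by metis
  have "(\<lambda>n. norm (f n)) summable_on UNIV"
    using summable_on_UNIV_nonneg_real_iff[of "\<lambda>n. norm (f n)"] s by simp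
  then have "(\<lambda>n. norm (f (p n))) summable_on UNIV"
    using summable_on_reindex_bij_betw[OF bb, of "\<lambda>n. norm (f n)"] by simp
  then show "summable (\<lambda>n. norm (f (p n)))"
    using summable_on_UNIV_nonneg_real_iff[of "\<lambda>n. norm (f (p n))"] by simp
qed

lemma ell2_perm: assumes "bij p" "u \<in> ell2" shows "(\<lambda>n. u (p n)) \<in> ell2"
proof -
  have "summable (\<lambda>n. norm ((cmod (u n))\<^sup>2))" using assms(2) unfolding ell2_def by simp
  from reindex_suminf(1)[OF assms(1) this] show ?thesis unfolding ell2_def by simp
qed

lemma inner_summable: assumes "x \<in> ell2" "y \<in> ell2"
  shows "summable (\<lambda>n. norm (x n * cnj (y n)))"
proof (rule summable_comparison_test'[where N = 0])
  show "summable (\<lambda>n. (cmod (x n))\<^sup>2 + (cmod (y n))\<^sup>2)"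
    using assms unfolding ell2_def by (intro summable_add) auto
  fix n
  have "2 * (cmod (x n) * cmod (y n)) \<le> (cmod (x n))\<^sup>2 + (cmod (y n))\<^sup>2"
    using sum_squares_bound[of "cmod (x n)" "cmod (y n)"] by (simp add: mult.assoc)
  moreover have "0 \<le> cmod (x n) * cmod (y n)" by simp
  ultimately have "cmod (x n) * cmod (y n) \<le> (cmod (x n))\<^sup>2 + (cmod (y n))\<^sup>2" by linarith
  then show "norm (norm (x n * cnj (y n))) \<le> (cmod (x n))\<^sup>2 + (cmod (y n))\<^sup>2"
    by (simp add: norm_mult)
qed

lemma l2inner_perm: assumes "bij p" "x \<in> ell2" "y \<in> ell2"
  shows "l2inner (\<lambda>n. x (p n)) (\<lambda>n. y (p n)) = l2inner x y"
  unfolding l2inner_def using reindex_suminf(2)[OF assms(1) inner_summable[OF assms(2,3)]] by simp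

lemma ell2_add: assumes "x \<in> ell2" "y \<in> ell2" shows "(\<lambda>n. x n + y n) \<in> ell2"
proof -
  have sm: "summable (\<lambda>n. 2 * (cmod (x n))\<^sup>2 + 2 * (cmod (y n))\<^sup>2)"
    using assms unfolding ell2_def by (intro summable_add summable_mult) auto
  have bd: "norm ((cmod (x n + y n))\<^sup>2) \<le> 2 * (cmod (x n))\<^sup>2 + 2 * (cmod (y n))\<^sup>2" for n
  proof -
    have "cmod (x n + y n) \<le> cmod (x n) + cmod (y n)" by (rule norm_triangle_ineq)
    then have "(cmod (x n + y n))\<^sup>2 \<le> (cmod (x n) + cmod (y n))\<^sup>2"
      by (simp add: power_mono)
    also have "\<dots> \<le> 2 * (cmod (x n))\<^sup>2 + 2 * (cmod (y n))\<^sup>2"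
      using sum_squares_bound[of "cmod (x n)" "cmod (y n)"] by (simp add: power2_sum)
    finally show ?thesis by simp
  qed
  show ?thesis unfolding ell2_def mem_Collect_eq
    by (rule summable_comparison_test'[OF sm bd])
qed

lemma ell2_uminus: "x \<in> ell2 \<Longrightarrow> (\<lambda>n. - x n) \<in> ell2"
  unfolding ell2_def by simp

lemma ell2_diff: "x \<in> ell2 \<Longrightarrow> y \<in> ell2 \<Longrightarrow> (\<lambda>n. x n - y n) \<in> ell2"
  using ell2_add[of x "\<lambda>n. - y n"] ell2_uminus[of y] by simp

lemma ell2_finite: "finite N \<Longrightarrow> (\<And>n. n \<notin> N \<Longrightarrow> x n = 0) \<Longrightarrow> x \<in> ell2"
  unfolding ell2_def mem_Collect_eq by (rule summable_finite[of N]) auto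

lemma ell2_coord: assumes "u \<in> ell2" shows "cmod (u n) \<le> l2norm u"
proof -
  have s: "summable (\<lambda>n. (cmod (u n))\<^sup>2)" using assms unfolding ell2_def by simp
  have "sum (\<lambda>n. (cmod (u n))\<^sup>2) {n} \<le> (\<Sum>n. (cmod (u n))\<^sup>2)"
    by (rule sum_le_suminf[OF s]) auto
  then have "(cmod (u n))\<^sup>2 \<le> (\<Sum>n. (cmod (u n))\<^sup>2)" by simp
  then have "sqrt ((cmod (u n))\<^sup>2) \<le> l2norm u" unfolding l2norm_def using real_sqrt_le_mono by blast
  then show ?thesis by simp
qed

lemma ell2_tendsto: assumes "u \<in> ell2" "0 < d" shows "finite {n. d \<le> cmod (u n)}"
proof -
  have s: "summable (\<lambda>n. (cmod (u n))\<^sup>2)" using assms unfolding ell2_def by simp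
  have lim: "(\<lambda>n. (cmod (u n))\<^sup>2) \<longlonglongrightarrow> 0" by (rule summable_LIMSEQ_zero[OF s])
  have "eventually (\<lambda>n. (cmod (u n))\<^sup>2 < d\<^sup>2) sequentially"
    using order_tendstoD(2)[OF lim, of "d\<^sup>2"] assms(2) by simp
  then obtain N where N: "\<And>n. n \<ge> N \<Longrightarrow> (cmod (u n))\<^sup>2 < d\<^sup>2"
    unfolding eventually_sequentially by auto
  have "{n. d \<le> cmod (u n)} \<subseteq> {..<N}"
  proof
    fix n assume "n \<in> {n. d \<le> cmod (u n)}"
    then have "d\<^sup>2 \<le> (cmod (u n))\<^sup>2" using assms(2) by (simp add: power_mono)
    then show "n \<in> {..<N}" using N by (meson leI lessThan_iff not_less)
  qed
  then show ?thesis by (rule finite_subset) simp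
qed

section \<open>Countability\<close>

definition enc :: "int \<times> nat list \<Rightarrow> (int \<Rightarrow> nat)" where
  "enc al = (\<lambda>k. if fst al \<le> k \<and> k < fst al + int (length (snd al)) then snd al ! nat (k - fst al) else 0)"

lemma Yq_enc: assumes "y \<in> Yq q" shows "y \<in> range enc"
proof (cases "{k. y k \<noteq> 0} = {}")
  case True
  then have "y = enc (0, [])" unfolding enc_def by auto
  then show ?thesis by blast
next
  case False
  let ?S = "{k. y k \<noteq> 0}"
  have fin: "finite ?S" using assms unfolding Yq_def by auto
  define a where "a = Min ?S"
  define b where "b = Max ?S"
  obtain k0 where k0: "k0 \<in> ?S" using False by blast
  have ab: "a \<le> b" unfolding a_def b_def using Min_le[OF fin k0] Max_ge[OF fin k0] by linarith
  define l where "l = map (\<lambda>i. y (a + int i)) [0..<nat (b - a + 1)]"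
  have "y = enc (a, l)"
  proof
    fix k
    show "y k = enc (a, l) k"
    proof (cases "a \<le> k \<and> k \<le> b")
      case True
      then have "enc (a, l) k = y (a + int (nat (k - a)))" unfolding enc_def l_def using ab
        by auto
      then show ?thesis using True by simp
    next
      case F: False
      have "k \<notin> ?S" using F fin False unfolding a_def b_def
        by (meson Max_ge Min_le)
      then show ?thesis using F unfolding enc_def l_def by auto
    qed
  qed
  then show ?thesis by blast
qed

lemma Xs_countable: "countable (Xs q)"
proof -
  have "countable (range enc)" by simp
  then have "countable (Yq q)" using Yq_enc by (meson countable_subset subsetI)
  then show ?thesis unfolding Xs_def by simp
qed

lemma Xs_infinite: assumes "2 \<le> q" shows "infinite (Xs q)"
proof
  assume fin: "finite (Xs q)"
  have "inj_on ray (Yq q)" using ray_inj by (meson inj_onI)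
  then have finY: "finite (Yq q)" using fin unfolding Xs_def using finite_imageD by blast
  define f where "f = (\<lambda>n::nat. \<lambda>k::int. if k = int n then 1::nat else 0)"
  have "range f \<subseteq> Yq q" unfolding f_def Yq_def using assms by auto
  then have "finite (range f)" using finY finite_subset by blast
  moreover have "inj f" unfolding f_def inj_def by (metis of_nat_eq_iff zero_neq_one)
  ultimately have "finite (UNIV :: nat set)" using finite_imageD by blast
  then show False by simp
qed


section \<open>Linear algebra\<close>

interpretation fvs: vector_space "(\<lambda>(c::complex) (f::nat \<Rightarrow> complex). (\<lambda>n. c * f n))"
  by unfold_locales (auto simp: fun_eq_iff algebra_simps)

lemma sum_fun_app: "(\<Sum>v\<in>U. f v) (n::nat) = (\<Sum>v\<in>U. f v n)"
  for f :: "'a \<Rightarrow> nat \<Rightarrow> complex"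
  by (induct U rule: infinite_finite_induct) auto

lemma cspan_sub_span: assumes "finite S" shows "cspan S \<subseteq> fvs.span S"
proof
  fix x assume "x \<in> cspan S"
  then obtain c where c: "x = (\<lambda>n. \<Sum>v\<in>S. c v * v n)" unfolding cspan_def by auto
  have "x = (\<Sum>v\<in>S. (\<lambda>n. c v * v n))" unfolding c by (rule ext) (simp add: sum_fun_app)
  also have "\<dots> \<in> fvs.span S"
    by (intro fvs.span_sum fvs.span_scale fvs.span_base)
  finally show "x \<in> fvs.span S" .
qed

lemma ell2_scale: "x \<in> ell2 \<Longrightarrow> (\<lambda>n. c * x n) \<in> ell2"
  unfolding ell2_def by (simp add: norm_mult power_mult_distrib summable_mult)

lemma ell2_zero: "(\<lambda>n. 0) \<in> ell2"
  unfolding ell2_def by simp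

lemma cspan_ell2: assumes "finite S" "S \<subseteq> ell2" shows "cspan S \<subseteq> ell2"
proof
  fix x assume "x \<in> cspan S"
  then obtain c where c: "x = (\<lambda>n. \<Sum>v\<in>S. c v * v n)" unfolding cspan_def by auto
  have "(\<lambda>n. \<Sum>v\<in>T. c v * v n) \<in> ell2" if "T \<subseteq> S" for T
    using finite_subset[OF that assms(1)] that
  proof (induct T rule: finite_induct)
    case empty then show ?case using ell2_zero by simp
  next
    case (insert v T)
    then have "(\<lambda>n. c v * v n) \<in> ell2" using assms(2) ell2_scale by auto
    then show ?case using insert ell2_add[of "\<lambda>n. c v * v n" "\<lambda>n. \<Sum>v\<in>T. c v * v n"] by simp
  qed
  then show "x \<in> ell2" using c by blast
qed

lemma diag_indep:
  fixes vj :: "nat \<Rightarrow> nat \<Rightarrow> complex" and pt :: "nat \<Rightarrow> nat"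
  assumes J: "J \<subseteq> {..m}" and sum0: "\<And>n. (\<Sum>j\<in>J. c j * vj j n) = 0"
    and off: "\<And>i j. i \<le> m \<Longrightarrow> j \<le> m \<Longrightarrow> i \<noteq> j \<Longrightarrow> cmod (vj j (pt i)) \<le> d"
    and dia: "\<And>i. vj i (pt i) = a" and da: "2 * real (m + 1) * d \<le> cmod a" and a: "a \<noteq> 0"
    and d0: "0 \<le> d"
  shows "\<forall>j\<in>J. c j = 0"
proof (cases "J = {}")
  case True then show ?thesis by simp
next
  case False
  have fJ: "finite J" using J finite_subset by blast
  define M where "M = Max ((\<lambda>j. cmod (c j)) ` J)"
  have "M \<in> (\<lambda>j. cmod (c j)) ` J" unfolding M_def using fJ False by (intro Max_in) auto
  then obtain js where js: "js \<in> J" "cmod (c js) = M" by auto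
  have Mge: "cmod (c j) \<le> M" if "j \<in> J" for j unfolding M_def using fJ that by simp
  have "(\<Sum>j\<in>J. c j * vj j (pt js)) = c js * a + (\<Sum>j\<in>J - {js}. c j * vj j (pt js))"
    using fJ js(1) dia by (simp add: sum.remove)
  then have eq: "c js * a = - (\<Sum>j\<in>J - {js}. c j * vj j (pt js))" using sum0[of "pt js"]
    by (simp add: eq_neg_iff_add_eq_0)
  have "M * cmod a = cmod (c js * a)" using js(2) by (simp add: norm_mult)
  also have "\<dots> = cmod (\<Sum>j\<in>J - {js}. c j * vj j (pt js))" unfolding eq by (rule norm_minus_cancel)
  also have "\<dots> \<le> (\<Sum>j\<in>J - {js}. cmod (c j * vj j (pt js)))" by (rule norm_sum)
  also have "\<dots> \<le> (\<Sum>j\<in>J - {js}. M * d)"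
  proof (rule sum_mono)
    fix j assume j: "j \<in> J - {js}"
    have "cmod (vj j (pt js)) \<le> d" using off[of js j] j js(1) J by auto
    moreover have "cmod (c j) \<le> M" using Mge j by auto
    moreover have "0 \<le> M" using \<open>cmod (c j) \<le> M\<close> norm_ge_zero[of "c j"] by linarith
    ultimately have "cmod (c j) * cmod (vj j (pt js)) \<le> M * d"
      using d0 by (intro mult_mono) auto
    then show "cmod (c j * vj j (pt js)) \<le> M * d" by (simp add: norm_mult)
  qed
  also have "\<dots> = real (card (J - {js})) * (M * d)" by simp
  also have "\<dots> \<le> real (m + 1) * (M * d)"
  proof -
    have "J - {js} \<subseteq> {..m}" using J by blast
    then have "card (J - {js}) \<le> card {..m}" by (intro card_mono) auto
    then have "real (card (J - {js})) \<le> real (m + 1)" by simp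
    moreover have "0 \<le> M" using js(2) norm_ge_zero by metis
    then have "0 \<le> M * d" using d0 by simp
    ultimately show ?thesis by (rule mult_right_mono)
  qed
  finally have "M * cmod a \<le> real (m + 1) * (M * d)" .
  moreover have "real (m + 1) * (M * d) \<le> M * (cmod a / 2)"
  proof -
    have "real (m + 1) * d \<le> cmod a / 2" using da by (simp add: algebra_simps)
    then have "M * (real (m + 1) * d) \<le> M * (cmod a / 2)"
      using js(2) norm_ge_zero[of "c js"] by (intro mult_left_mono) auto
    then show ?thesis by (simp add: ac_simps)
  qed
  ultimately have "M * cmod a \<le> M * (cmod a / 2)" by linarith
  moreover have "0 < cmod a" using a by simp
  ultimately have "M * (cmod a / 2) \<le> 0" by (simp add: algebra_simps)
  moreover have "0 < cmod a / 2" using \<open>0 < cmod a\<close> by simp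
  ultimately have "M \<le> 0" by (simp add: mult_le_0_iff)
  then have "\<forall>j\<in>J. cmod (c j) \<le> 0"
  proof (intro ballI)
    fix j assume "j \<in> J" "M \<le> 0"
    then show "cmod (c j) \<le> 0" using Mge[of j] by linarith
  qed
  then show ?thesis by simp
qed


section \<open>Max-support function\<close>

lemma supp_shy: "{k. shy d y k \<noteq> 0} = (\<lambda>k. k - d) ` {k. y k \<noteq> 0}"
  unfolding shy_def by (auto simp: image_iff intro!: exI[of _ "_ + d"])

lemma Mx_shy: assumes "y \<in> Yq q" "{k. y k \<noteq> 0} \<noteq> {}" shows "Mx (shy d y) = Mx y - d"
proof -
  have fin: "finite {k. y k \<noteq> 0}" using assms unfolding Yq_def by auto
  have m: "mono (\<lambda>k::int. k - d)" by (simp add: mono_def)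
  have ne': "(\<lambda>k. k - d) ` {k. y k \<noteq> 0} \<noteq> {}" using assms(2) by blast
  have e1: "Mx (shy d y) = Max ((\<lambda>k. k - d) ` {k. y k \<noteq> 0})"
    unfolding Mx_def supp_shy by (rule if_not_P[OF ne'])
  have e2: "Mx y = Max {k. y k \<noteq> 0}" unfolding Mx_def by (rule if_not_P[OF assms(2)])
  have "Max ((\<lambda>k. k - d) ` {k. y k \<noteq> 0}) = Max {k. y k \<noteq> 0} - d"
    using mono_Max_commute[OF m fin assms(2)] by simp
  then show ?thesis using e1 e2 by simp
qed

lemma shy_zero: "{k. y k \<noteq> 0} = {} \<Longrightarrow> shy d y = y"
  unfolding shy_def by auto

lemma Mx_upd0: assumes fin: "finite {k. y k \<noteq> 0}" and k: "y k \<noteq> 0" "0 < k"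
  shows "Mx (y(0 := a)) = Mx y"
proof -
  define S where "S = {k. y k \<noteq> 0}"
  define S' where "S' = {k. (y(0 := a)) k \<noteq> 0}"
  have fin': "finite S'" unfolding S'_def
    by (rule finite_subset[of _ "insert 0 {k. y k \<noteq> 0}"]) (use fin in auto)
  have fin0: "finite S" using fin unfolding S_def .
  have kS: "k \<in> S" and kS': "k \<in> S'" using k unfolding S_def S'_def by auto
  have neS: "S \<noteq> {}" and neS': "S' \<noteq> {}" using kS kS' by auto
  have m1: "Max S \<in> S" using Max_in[OF fin0 neS] .
  have "Max S \<ge> k" using Max_ge[OF fin0 kS] .
  then have "Max S \<noteq> 0" using k by auto
  then have "Max S \<in> S'" using m1 unfolding S_def S'_def by simp
  then have 1: "Max S \<le> Max S'" using Max_ge[OF fin'] by blast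
  have m2: "Max S' \<in> S'" using Max_in[OF fin' neS'] .
  have "Max S' \<ge> k" using Max_ge[OF fin' kS'] .
  then have "Max S' \<noteq> 0" using k by auto
  then have "Max S' \<in> S" using m2 unfolding S_def S'_def by simp
  then have 2: "Max S' \<le> Max S" using Max_ge[OF fin0] by blast
  have e1: "Mx (y(0 := a)) = Max S'" unfolding Mx_def S'_def[symmetric] by (rule if_not_P[OF neS'])
  have e2: "Mx y = Max S" unfolding Mx_def S_def[symmetric] by (rule if_not_P[OF neS])
  show ?thesis using e1 e2 1 2 by simp
qed

lemma tt_img: "y \<in> Yq q \<Longrightarrow> restrict shift_t (tree_V q) ` ray y = ray (shy (-1) y)"
  by (rule trans[OF restrict_img[OF ray_sub] shift_ray])

lemma ss_img: "y \<in> Yq q \<Longrightarrow> restrict (perm_below_v q p) (tree_V q) ` ray y = ray (sig p y)"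
  by (rule trans[OF restrict_img[OF ray_sub] perm_ray])

lemma v0_in: "0 < q \<Longrightarrow> (0::int, \<lambda>_::int. 0::nat) \<in> tree_V q"
  unfolding tree_V_def by auto

lemma zero_Yq: "0 < q \<Longrightarrow> (\<lambda>_. 0) \<in> Yq q"
  unfolding Yq_def by auto

section \<open>The representation\<close>

locale dasetup =
  fixes q :: nat and F :: "('f, 'c) monoid_scheme" and \<phi> :: "'f \<Rightarrow> nat \<Rightarrow> nat"
  assumes bijp: "\<forall>g\<in>carrier F. bij_betw (\<phi> g) {..<q} {..<q}" and q2: "2 \<le> q"
begin

abbreviation "BG \<equiv> BijGroup (tree_V q)"
abbreviation "GG \<equiv> DA q F \<phi>"
abbreviation "tt \<equiv> restrict shift_t (tree_V q)"
abbreviation "ss g \<equiv> restrict (perm_below_v q (\<phi> g)) (tree_V q)"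

definition idx where "idx = to_nat_on (Xs q)"
definition rep where "rep = inv_into (Xs q) idx"
definition invB where "invB g = inv\<^bsub>BG\<^esub> g"
definition pg where "pg g n = idx (invB g ` rep n)"
definition piR where "piR g u = (\<lambda>n. u (pg g n))"
definition yof where "yof A = (SOME y. y \<in> Yq q \<and> ray y = A)"
definition Fn where "Fn n = Mx (yof (rep n))"
definition beta :: "(vert \<Rightarrow> vert) \<Rightarrow> int" where "beta g = fst (g (0, \<lambda>_. 0))"
definition bco where "bco g = (\<lambda>n. complex_of_int (Fn (pg g n) - Fn n + beta g))"

lemma q0: "0 < q" using q2 by simp

lemma idx_bij: "bij_betw idx (Xs q) UNIV"
  unfolding idx_def by (rule to_nat_on_infinite[OF Xs_countable Xs_infinite[OF q2]])

lemma rep_in: "rep n \<in> Xs q"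
proof -
  have "n \<in> idx ` Xs q" using idx_bij by (simp add: bij_betw_def)
  then show ?thesis unfolding rep_def by (rule inv_into_into)
qed

lemma idx_rep[simp]: "idx (rep n) = n"
proof -
  have "n \<in> idx ` Xs q" using idx_bij by (simp add: bij_betw_def)
  then show ?thesis unfolding rep_def by (rule f_inv_into_f)
qed

lemma rep_idx: "A \<in> Xs q \<Longrightarrow> rep (idx A) = A"
proof -
  assume A: "A \<in> Xs q"
  have "inj_on idx (Xs q)" using idx_bij by (simp add: bij_betw_def)
  then show ?thesis unfolding rep_def using A by (rule inv_into_f_f)
qed

lemma ray_Xs: "y \<in> Yq q \<Longrightarrow> ray y \<in> Xs q" unfolding Xs_def by blast

lemma rep_ray: obtains y where "y \<in> Yq q" "rep n = ray y"
  using rep_in[of n] unfolding Xs_def by auto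

lemma yof_ray: "y \<in> Yq q \<Longrightarrow> yof (ray y) = y"
  unfolding yof_def by (rule some_equality) (auto dest: ray_inj)

lemma Fn_ray: "y \<in> Yq q \<Longrightarrow> Fn (idx (ray y)) = Mx y"
  unfolding Fn_def rep_idx[OF ray_Xs] by (simp add: yof_ray)

lemma carr_good: "g \<in> carrier GG \<Longrightarrow> good q g"
  using DA_good[OF bijp] by blast

lemma subg: "subgroup (carrier GG) BG" by (rule DA_subgroup)

lemma carr_B: "g \<in> carrier GG \<Longrightarrow> g \<in> carrier BG"
  using subgroup.subset[OF subg] by blast

lemma inv_carr: "g \<in> carrier GG \<Longrightarrow> invB g \<in> carrier GG"
  unfolding invB_def using subgroup.m_inv_closed[OF subg] by blast

lemma mult_carr: "g \<in> carrier GG \<Longrightarrow> h \<in> carrier GG \<Longrightarrow> g \<otimes>\<^bsub>GG\<^esub> h \<in> carrier GG"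
  unfolding DA_mult using subgroup.m_closed[OF subg] by blast

lemma gB: "group BG" by (rule group_BijGroup)

lemma tt_carr: "tt \<in> carrier GG"
  unfolding DA_carrier using tt_Bij by (intro generate.incl) (auto simp: BijGroup_def)

lemma ss_carr: "g \<in> carrier F \<Longrightarrow> ss g \<in> carrier GG"
  unfolding DA_carrier using ss_Bij bijp by (intro generate.incl) (auto simp: BijGroup_def)

lemma img_Xs: "g \<in> carrier GG \<Longrightarrow> A \<in> Xs q \<Longrightarrow> g ` A \<in> Xs q"
  using carr_good unfolding good_def by blast

lemma invB_img_Xs: "g \<in> carrier GG \<Longrightarrow> A \<in> Xs q \<Longrightarrow> invB g ` A \<in> Xs q"
  using img_Xs inv_carr by blast

lemma BijGroup_carrier: "carrier (BijGroup S) = Bij S" by (simp add: BijGroup_def)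

lemma invB_eq: assumes "g \<in> carrier GG" shows "invB g = restrict (inv_into (tree_V q) g) (tree_V q)"
proof -
  have "g \<in> Bij (tree_V q)" using carr_B[OF assms] by (simp only: BijGroup_carrier)
  then show ?thesis unfolding invB_def by (rule inv_BijGroup)
qed

lemma invB_img: assumes "g \<in> carrier GG" "y \<in> Yq q" "g ` ray y' = ray y" "y' \<in> Yq q"
  shows "invB g ` ray y = ray y'"
proof -
  have "g \<in> Bij (tree_V q)" using carr_B[OF assms(1)] by (simp add: BijGroup_def)
  then have "restrict (inv_into (tree_V q) g) (tree_V q) ` (g ` ray y') = ray y'"
    by (rule inv_img[OF _ ray_sub[OF assms(4)]])
  then show ?thesis unfolding invB_eq[OF assms(1)] assms(3) .
qed

lemma pg_mult: assumes g: "g \<in> carrier GG" and h: "h \<in> carrier GG"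
  shows "pg (g \<otimes>\<^bsub>GG\<^esub> h) n = pg h (pg g n)"
proof -
  have gB': "g \<in> carrier BG" "h \<in> carrier BG" using carr_B g h by auto
  have iB: "invB g \<in> Bij (tree_V q)" "invB h \<in> Bij (tree_V q)"
    using carr_B[OF inv_carr[OF g]] carr_B[OF inv_carr[OF h]] by (auto simp: BijGroup_def)
  have "invB (g \<otimes>\<^bsub>GG\<^esub> h) = invB h \<otimes>\<^bsub>BG\<^esub> invB g"
    unfolding invB_def DA_mult by (rule group.inv_mult_group[OF gB gB'])
  also have "\<dots> = compose (tree_V q) (invB h) (invB g)" using iB by (simp add: BijGroup_mult)
  finally have e: "invB (g \<otimes>\<^bsub>GG\<^esub> h) ` rep n = invB h ` invB g ` rep n"
    using compose_img[OF Xs_sub[OF rep_in]] by simp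
  show ?thesis unfolding pg_def e using rep_idx[OF invB_img_Xs[OF g rep_in]] by simp
qed

lemma one_GG: "one GG = (\<lambda>x\<in>tree_V q. x)"
  unfolding DA_one by (simp add: BijGroup_one)

lemma one_carr: "one GG \<in> carrier GG"
  unfolding DA_one by (rule subgroup.one_closed[OF subg])

lemma pg_one: "pg (one GG) n = n"
proof -
  have "invB (one GG) = one BG" unfolding invB_def DA_one by (rule monoid.inv_one[OF group.is_monoid[OF gB]])
  then have "invB (one GG) ` rep n = rep n"
    using Xs_sub[OF rep_in[of n]] by (auto simp: BijGroup_one)
  then show ?thesis unfolding pg_def by simp
qed

lemma l_inv_GG: "g \<in> carrier GG \<Longrightarrow> invB g \<otimes>\<^bsub>GG\<^esub> g = one GG"
  unfolding invB_def DA_mult DA_one using carr_B group.l_inv[OF gB] by blast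

lemma r_inv_GG: "g \<in> carrier GG \<Longrightarrow> g \<otimes>\<^bsub>GG\<^esub> invB g = one GG"
  unfolding invB_def DA_mult DA_one using carr_B group.r_inv[OF gB] by blast

lemma pg_bij: assumes g: "g \<in> carrier GG" shows "bij (pg g)"
proof -
  have 1: "pg g (pg (invB g) n) = n" for n
    using pg_mult[OF inv_carr[OF g] g, of n] l_inv_GG[OF g] pg_one by simp
  have 2: "pg (invB g) (pg g n) = n" for n
    using pg_mult[OF g inv_carr[OF g], of n] r_inv_GG[OF g] pg_one by simp
  show ?thesis by (rule bij_betw_byWitness[where f'="pg (invB g)"]) (auto simp: 1 2)
qed

lemma piR_mult: "g \<in> carrier GG \<Longrightarrow> h \<in> carrier GG \<Longrightarrow> piR (g \<otimes>\<^bsub>GG\<^esub> h) u = piR g (piR h u)"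
  unfolding piR_def by (simp add: pg_mult)

lemma piR_one: "piR (one GG) u = u"
  unfolding piR_def by (simp add: pg_one)

lemma piR_ell2: "g \<in> carrier GG \<Longrightarrow> u \<in> ell2 \<Longrightarrow> piR g u \<in> ell2"
  unfolding piR_def by (rule ell2_perm[OF pg_bij])

lemma unitary_piR: assumes g: "g \<in> carrier GG" shows "unitary_op (piR g)"
proof -
  have "piR g ` ell2 = ell2"
  proof
    show "piR g ` ell2 \<subseteq> ell2" using piR_ell2[OF g] by blast
    show "ell2 \<subseteq> piR g ` ell2"
    proof
      fix u assume u: "u \<in> ell2"
      have "piR g (piR (invB g) u) = piR (g \<otimes>\<^bsub>GG\<^esub> invB g) u"
        by (rule piR_mult[OF g inv_carr[OF g], symmetric])
      also have "\<dots> = u" by (simp only: r_inv_GG[OF g] piR_one)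
      finally have "piR g (piR (invB g) u) = u" .
      then show "u \<in> piR g ` ell2" using piR_ell2[OF inv_carr[OF g] u] by (rule image_eqI[OF sym])
    qed
  qed
  moreover have "\<forall>x\<in>ell2. \<forall>y\<in>ell2. l2inner (piR g x) (piR g y) = l2inner x y"
    unfolding piR_def using l2inner_perm[OF pg_bij[OF g]] by blast
  moreover have "\<forall>x\<in>ell2. \<forall>y\<in>ell2. piR g (vadd x y) = vadd (piR g x) (piR g y)"
    unfolding piR_def vadd_def by simp
  moreover have "\<forall>c. \<forall>x\<in>ell2. piR g (vscale c x) = vscale c (piR g x)"
    unfolding piR_def vscale_def by simp
  ultimately show ?thesis unfolding unitary_op_def by (intro conjI)
qed

lemma unitary_rep_piR: "unitary_rep GG piR"
  unfolding unitary_rep_def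
proof (intro conjI ballI)
  show "\<And>g. g \<in> carrier GG \<Longrightarrow> unitary_op (piR g)" by (rule unitary_piR)
  show "\<And>g h x. g \<in> carrier GG \<Longrightarrow> h \<in> carrier GG \<Longrightarrow> piR (g \<otimes>\<^bsub>GG\<^esub> h) x = piR g (piR h x)"
    by (rule piR_mult)
  show "\<And>x. piR \<one>\<^bsub>GG\<^esub> x = x" by (rule piR_one)
qed

lemma beta_lev: assumes "g \<in> carrier GG" shows "\<forall>x\<in>tree_V q. fst (g x) = fst x + beta g"
proof -
  obtain c where c: "\<forall>x\<in>tree_V q. fst (g x) = fst x + c"
    using carr_good[OF assms] unfolding good_def by blast
  have "beta g = c" unfolding beta_def using c v0_in[OF q0] by fastforce
  then show ?thesis using c by simp
qed

lemma beta_mult: assumes g: "g \<in> carrier GG" and h: "h \<in> carrier GG"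
  shows "beta (g \<otimes>\<^bsub>GG\<^esub> h) = beta g + beta h"
proof -
  have gb: "g \<in> Bij (tree_V q)" "h \<in> Bij (tree_V q)" using carr_B g h by (auto simp: BijGroup_def)
  have hv: "h (0, \<lambda>_. 0) \<in> tree_V q" using gb(2) v0_in[OF q0] unfolding Bij_def bij_betw_def by auto
  have "(g \<otimes>\<^bsub>GG\<^esub> h) (0, \<lambda>_. 0) = g (h (0, \<lambda>_. 0))"
    unfolding DA_mult using gb v0_in[OF q0] by (simp add: BijGroup_mult compose_def)
  then show ?thesis using beta_lev[OF g] hv unfolding beta_def by simp
qed

lemma beta_one: "beta (one GG) = 0"
  unfolding beta_def one_GG using v0_in[OF q0] by simp

lemma bco_mult: "g \<in> carrier GG \<Longrightarrow> h \<in> carrier GG \<Longrightarrow>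
    bco (g \<otimes>\<^bsub>GG\<^esub> h) = vadd (bco g) (piR g (bco h))"
  unfolding bco_def vadd_def piR_def by (rule ext) (simp add: pg_mult beta_mult)

lemma bco_one: "bco (one GG) = (\<lambda>n. 0)"
  unfolding bco_def by (simp add: pg_one beta_one)

lemma pg_tt: assumes "y \<in> Yq q" shows "pg tt (idx (ray y)) = idx (ray (shy 1 y))"
proof -
  have "tt ` ray (shy 1 y) = ray y" using tt_img[OF shy_Yq[OF assms]] by simp
  then have "invB tt ` ray y = ray (shy 1 y)"
    by (rule invB_img[OF tt_carr assms _ shy_Yq[OF assms]])
  then show ?thesis unfolding pg_def rep_idx[OF ray_Xs[OF assms]] by simp
qed

lemma beta_tt: "beta tt = 1"
  unfolding beta_def using v0_in[OF q0] by (simp add: shift_t_def)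

lemma beta_ss: "beta (ss g) = 0"
  unfolding beta_def using v0_in[OF q0] by (simp add: perm_below_v_def)

lemma idx_inj: "A \<in> Xs q \<Longrightarrow> B \<in> Xs q \<Longrightarrow> idx A = idx B \<Longrightarrow> A = B"
  using idx_bij unfolding bij_betw_def inj_on_def by blast


lemma idx_ray_inj: "y \<in> Yq q \<Longrightarrow> y' \<in> Yq q \<Longrightarrow> idx (ray y) = idx (ray y') \<Longrightarrow> y = y'"
  using idx_inj[OF ray_Xs ray_Xs] ray_inj by blast

lemma bco_tt: "bco tt = (\<lambda>n. if n = idx (ray (\<lambda>_. 0)) then 1 else 0)"
proof
  fix n
  obtain y where y: "y \<in> Yq q" "rep n = ray y" using rep_ray by blast
  have n: "n = idx (ray y)" using idx_rep[of n] y(2) by simp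
  have p: "pg tt n = idx (ray (shy 1 y))" unfolding n by (rule pg_tt[OF y(1)])
  show "bco tt n = (if n = idx (ray (\<lambda>_. 0)) then 1 else 0)"
  proof (cases "{k. y k \<noteq> 0} = {}")
    case True
    then have y0: "y = (\<lambda>_. 0)" by auto
    have "shy 1 y = y" using shy_zero[OF True] .
    then have "Fn (pg tt n) = Fn n" using p n by simp
    then have "bco tt n = complex_of_int (beta tt)" unfolding bco_def by simp
    then show ?thesis using beta_tt n y0 by simp
  next
    case False
    have yne: "y \<noteq> (\<lambda>_. 0)" using False by auto
    have ne: "n \<noteq> idx (ray (\<lambda>_. 0))"
    proof
      assume A: "n = idx (ray (\<lambda>_. 0))"
      have "idx (ray y) = idx (ray (\<lambda>_. 0))" using n A by simp
      then have "y = (\<lambda>_. 0)" by (rule idx_ray_inj[OF y(1) zero_Yq[OF q0]])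
      then show False using yne by simp
    qed
    have "Fn (pg tt n) = Mx y - 1" unfolding p
      using Fn_ray[OF shy_Yq[OF y(1)]] Mx_shy[OF y(1) False] by simp
    moreover have "Fn n = Mx y" unfolding n by (rule Fn_ray[OF y(1)])
    ultimately have "bco tt n = 0" unfolding bco_def using beta_tt by simp
    then show ?thesis using ne by simp
  qed
qed


lemma pg_ss: assumes g: "g \<in> carrier F" and y: "y \<in> Yq q"
  shows "pg (ss g) (idx (ray y)) = idx (ray (sig (inv_into {..<q} (\<phi> g)) y))"
proof -
  have bj: "bij_betw (\<phi> g) {..<q} {..<q}" using bijp g by blast
  have p': "\<forall>a<q. inv_into {..<q} (\<phi> g) a < q"
    using bj by (metis bij_betw_def inv_into_into lessThan_iff)
  have Y': "sig (inv_into {..<q} (\<phi> g)) y \<in> Yq q" using sig_Yq[OF y p'] .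
  have "ss g ` ray (sig (inv_into {..<q} (\<phi> g)) y) = ray y"
    using ss_img[OF Y', of "\<phi> g"] sig_inv[OF bj y] by simp
  then have "invB (ss g) ` ray y = ray (sig (inv_into {..<q} (\<phi> g)) y)"
    by (rule invB_img[OF ss_carr[OF g] y _ Y'])
  then show ?thesis unfolding pg_def rep_idx[OF ray_Xs[OF y]] by simp
qed

lemma bco_ss: assumes g: "g \<in> carrier F" shows "bco (ss g) \<in> ell2"
proof -
  define Z where "Z = (\<lambda>a. (\<lambda>_::int. 0::nat)(0 := a)) ` {..<q}"
  define E where "E = (\<lambda>y. idx (ray y)) ` Z"
  have finE: "finite E" unfolding E_def Z_def by simp
  have bj: "bij_betw (\<phi> g) {..<q} {..<q}" using bijp g by blast
  have p': "\<forall>a<q. inv_into {..<q} (\<phi> g) a < q"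
    using bj by (metis bij_betw_def inv_into_into lessThan_iff)
  show ?thesis
  proof (rule ell2_finite[OF finE])
    fix n assume nE: "n \<notin> E"
    obtain y where y: "y \<in> Yq q" "rep n = ray y" using rep_ray by blast
    have n: "n = idx (ray y)" using idx_rep[of n] y(2) by simp
    have yZ: "y \<notin> Z" using nE n unfolding E_def by blast
    define y' where "y' = sig (inv_into {..<q} (\<phi> g)) y"
    have Y': "y' \<in> Yq q" unfolding y'_def using sig_Yq[OF y(1) p'] .
    have "Mx y' = Mx y"
    proof (cases "\<forall>k<0. y k = 0")
      case False
      have "y' = y" unfolding y'_def sig_def by (rule if_not_P[OF False])
      then show ?thesis by simp
    next
      case True
      have "\<exists>k. k \<noteq> 0 \<and> y k \<noteq> 0"
      proof (rule ccontr)
        assume "\<not> (\<exists>k. k \<noteq> 0 \<and> y k \<noteq> 0)"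
        then have "y = (\<lambda>_. 0)(0 := y 0)" by (auto simp: fun_eq_iff)
        moreover have "y 0 < q" using y(1) unfolding Yq_def by auto
        ultimately have "y \<in> Z" unfolding Z_def by blast
        then show False using yZ by simp
      qed
      then obtain k where k: "k \<noteq> 0" "y k \<noteq> 0" by blast
      have k0: "0 < k"
      proof (rule ccontr)
        assume "\<not> 0 < k"
        then have "k < 0" using k(1) by simp
        then show False using True k(2) by simp
      qed
      have fin: "finite {k. y k \<noteq> 0}" using y(1) unfolding Yq_def by auto
      have "y' = y(0 := inv_into {..<q} (\<phi> g) (y 0))" unfolding y'_def sig_def using True by simp
      then show ?thesis using Mx_upd0[OF fin k(2) k0] by simp
    qed
    then show "bco (ss g) n = 0" unfolding bco_def n pg_ss[OF g y(1)] y'_def[symmetric]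
      using Fn_ray[OF y(1)] Fn_ray[OF Y'] beta_ss by simp
  qed
qed

lemma bco_tt_ell2: "bco tt \<in> ell2"
  unfolding bco_tt by (rule ell2_finite[of "{idx (ray (\<lambda>_. 0))}"]) auto

lemma inv_gen_bco: assumes h: "h \<in> carrier GG" and b: "bco h \<in> ell2"
  shows "bco (invB h) \<in> ell2"
proof -
  have "bco (invB h \<otimes>\<^bsub>GG\<^esub> h) = vadd (bco (invB h)) (piR (invB h) (bco h))"
    by (rule bco_mult[OF inv_carr[OF h] h])
  then have "(\<lambda>n. 0) = vadd (bco (invB h)) (piR (invB h) (bco h))"
    using l_inv_GG[OF h] bco_one by simp
  then have "bco (invB h) = (\<lambda>n. - piR (invB h) (bco h) n)"
    unfolding vadd_def by (auto simp: fun_eq_iff eq_neg_iff_add_eq_0)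
  then show ?thesis using ell2_uminus[OF piR_ell2[OF inv_carr[OF h] b]] by simp
qed

lemma bco_ell2: assumes "g \<in> carrier GG" shows "bco g \<in> ell2"
  using assms unfolding DA_carrier
proof (induction rule: generate.induct)
  case one
  then show ?case using bco_one ell2_zero DA_one by metis
next
  case (incl h)
  then show ?case using bco_tt_ell2 bco_ss by auto
next
  case (inv h)
  then have hc: "h \<in> carrier GG" using tt_carr ss_carr by auto
  have "bco h \<in> ell2" using inv bco_tt_ell2 bco_ss by auto
  then show ?case using inv_gen_bco[OF hc] unfolding invB_def by simp
next
  case (eng h1 h2)
  have c1: "h1 \<in> carrier GG" and c2: "h2 \<in> carrier GG" using eng(1,2) unfolding DA_carrier by auto
  have "bco (h1 \<otimes>\<^bsub>GG\<^esub> h2) = vadd (bco h1) (piR h1 (bco h2))" by (rule bco_mult[OF c1 c2])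
  moreover have "vadd (bco h1) (piR h1 (bco h2)) \<in> ell2"
    unfolding vadd_def using ell2_add[OF eng(3) piR_ell2[OF c1 eng(4)]] .
  ultimately show ?case unfolding DA_mult by simp
qed

lemma cocycle_bco: "cocycle GG piR bco"
  unfolding cocycle_def using bco_ell2 bco_mult by blast

lemma not_closure: "\<not> in_closure_coboundaries GG piR bco"
proof
  assume H: "in_closure_coboundaries GG piR bco"
  obtain \<xi> where xi: "\<xi> \<in> ell2" "\<forall>g\<in>{tt}. l2norm (vsub (bco g) (vsub (piR g \<xi>) \<xi>)) < 1/2"
    using H tt_carr unfolding in_closure_coboundaries_def
    by (metis (no_types, lifting) empty_subsetI finite.emptyI finite.insertI insert_subset
        divide_pos_pos zero_less_one zero_less_numeral)
  define n0 where "n0 = idx (ray (\<lambda>_. 0))"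
  have sh: "shy 1 (\<lambda>_::int. 0::nat) = (\<lambda>_. 0)" unfolding shy_def by simp
  have pg0: "pg tt n0 = n0" unfolding n0_def using pg_tt[OF zero_Yq[OF q0]] sh by simp
  define u where "u = vsub (bco tt) (vsub (piR tt \<xi>) \<xi>)"
  have u2: "u \<in> ell2" unfolding u_def vsub_def
    by (intro ell2_diff bco_tt_ell2 piR_ell2[OF tt_carr xi(1)] xi(1))
  have b0: "bco tt n0 = 1" unfolding bco_tt n0_def by simp
  have "u n0 = 1" unfolding u_def vsub_def piR_def pg0 b0 by simp
  then have "1 \<le> l2norm u" using ell2_coord[OF u2, of n0] by simp
  moreover have "l2norm u < 1/2" using xi(2) unfolding u_def by simp
  ultimately show False by simp
qed

lemma cspan_zero: "(\<lambda>_. 0) \<in> cspan S"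
  unfolding cspan_def by (auto intro!: exI[of _ "\<lambda>_. 0"])

lemma no_fd: assumes g1: "g1 \<in> carrier F" "\<phi> g1 0 = 1"
  and S: "finite S" "S \<subseteq> ell2" "cspan S \<noteq> {\<lambda>_. 0}"
  and inv: "\<forall>g\<in>carrier GG. \<forall>x\<in>cspan S. piR g x \<in> cspan S"
  shows False
proof -
  obtain w where w: "w \<in> cspan S" "w \<noteq> (\<lambda>_. 0)" using S(3) cspan_zero by blast
  then obtain n where n: "w n \<noteq> 0" by (auto simp: fun_eq_iff)
  obtain y where y: "y \<in> Yq q" "rep n = ray y" using rep_ray by blast
  have nn: "n = idx (ray y)" using idx_rep[of n] y(2) by simp
  obtain w' y0 where w': "w' \<in> cspan S" "y0 \<in> Yq q" "y0 \<noteq> (\<lambda>_. 0)" "w' (idx (ray y0)) \<noteq> 0"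
  proof (cases "y = (\<lambda>_. 0)")
    case False then show ?thesis using that[of w y] w n nn y by auto
  next
    case True
    define e1 where "e1 = (\<lambda>_::int. 0::nat)(0 := 1)"
    have e1Y: "e1 \<in> Yq q" unfolding e1_def Yq_def using q2
      by (auto intro: finite_subset[of _ "{0}"])
    have "sig (\<phi> g1) (\<lambda>_. 0) = e1" unfolding sig_def e1_def using g1(2) by simp
    then have "ss g1 ` ray (\<lambda>_. 0) = ray e1" using ss_img[OF zero_Yq[OF q0]] by simp
    then have "invB (ss g1) ` ray e1 = ray (\<lambda>_. 0)"
      by (rule invB_img[OF ss_carr[OF g1(1)] e1Y _ zero_Yq[OF q0]])
    then have "pg (ss g1) (idx (ray e1)) = n"
      unfolding pg_def rep_idx[OF ray_Xs[OF e1Y]] using nn True by simp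
    then have "piR (ss g1) w (idx (ray e1)) = w n" unfolding piR_def by simp
    moreover have "piR (ss g1) w \<in> cspan S" using inv ss_carr[OF g1(1)] w(1) by blast
    moreover have "e1 \<noteq> (\<lambda>_. 0)" unfolding e1_def by (auto simp: fun_eq_iff)
    ultimately show ?thesis using that[of "piR (ss g1) w" e1] e1Y n by auto
  qed
  define a where "a = w' (idx (ray y0))"
  define m where "m = card S"
  define d where "d = cmod a / (2 * real (m + 1))"
  have a0: "a \<noteq> 0" using w'(4) unfolding a_def .
  have d0: "0 < d" unfolding d_def using a0 by simp
  have da: "2 * real (m + 1) * d = cmod a" unfolding d_def by simp
  have dla: "d < cmod a"
  proof -
    have "1 * d < 2 * real (m + 1) * d" using d0 by (intro mult_strict_right_mono) auto
    then show ?thesis using da by simp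
  qed
  have w'2: "w' \<in> ell2" using cspan_ell2[OF S(1,2)] w'(1) by blast
  define xp where "xp c = idx (ray (shy (- c) y0))" for c :: int
  have ne0: "{k. y0 k \<noteq> 0} \<noteq> {}" using w'(3) by auto
  have xp_inj: "inj xp"
  proof (rule injI)
    fix c c' assume "xp c = xp c'"
    then have "shy (- c) y0 = shy (- c') y0"
      unfolding xp_def by (rule idx_ray_inj[OF shy_Yq[OF w'(2)] shy_Yq[OF w'(2)]])
    then have "Mx (shy (- c) y0) = Mx (shy (- c') y0)" by simp
    then show "c = c'" using Mx_shy[OF w'(2) ne0] by simp
  qed
  define I where "I = xp -` {n. d \<le> cmod (w' n)}"
  have finI: "finite I" unfolding I_def
    by (rule finite_vimageI[OF ell2_tendsto[OF w'2 d0]]) (use xp_inj in \<open>simp add: inj_on_def inj_def\<close>)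
  define D where "D = Suc (Max (insert 0 ((\<lambda>i. nat \<bar>i\<bar>) ` I)))"
  have D0: "0 < D" unfolding D_def by simp
  have DI: "\<bar>i\<bar> < int D" if "i \<in> I" for i
  proof -
    have "nat \<bar>i\<bar> \<le> Max (insert 0 ((\<lambda>i. nat \<bar>i\<bar>) ` I))" using finI that by (intro Max_ge) auto
    then show ?thesis unfolding D_def by linarith
  qed
  have small: "cmod (w' (xp (c * int D))) < d" if c: "c \<noteq> 0" for c
  proof (rule ccontr)
    assume "\<not> cmod (w' (xp (c * int D))) < d"
    then have "c * int D \<in> I" unfolding I_def by simp
    then have "\<bar>c * int D\<bar> < int D" by (rule DI)
    moreover have "int D \<le> \<bar>c * int D\<bar>" using c D0 by (simp add: abs_mult)
    ultimately show False by simp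
  qed
  define Pt :: "(nat \<Rightarrow> complex) \<Rightarrow> (nat \<Rightarrow> complex)" where "Pt = piR tt"
  have vk_span: "(Pt ^^ k) w' \<in> cspan S" for k
  proof (induct k)
    case 0 then show ?case using w'(1) by simp
  next
    case (Suc k) then show ?case unfolding Pt_def using inv tt_carr by simp
  qed
  have vk_val: "(Pt ^^ k) w' (idx (ray y)) = w' (idx (ray (shy (int k) y)))" if "y \<in> Yq q" for k y
    using that
  proof (induct k arbitrary: y)
    case 0 then show ?case by simp
  next
    case (Suc k)
    have "(Pt ^^ Suc k) w' (idx (ray y)) = (Pt ^^ k) w' (pg tt (idx (ray y)))"
      unfolding Pt_def piR_def by simp
    also have "\<dots> = (Pt ^^ k) w' (idx (ray (shy 1 y)))" using pg_tt[OF Suc(2)] by simp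
    also have "\<dots> = w' (idx (ray (shy (int k) (shy 1 y))))" using Suc(1)[OF shy_Yq[OF Suc(2)]] .
    also have "\<dots> = w' (idx (ray (shy (int (Suc k)) y)))" by (simp add: add.commute)
    finally show ?case .
  qed
  define vj where "vj j = (Pt ^^ (j * D)) w'" for j
  define pt where "pt i = xp (int i * int D)" for i
  have vj_pt: "vj j (pt i) = w' (xp ((int i - int j) * int D))" for i j
  proof -
    have "vj j (pt i) = w' (idx (ray (shy (int (j * D)) (shy (- (int i * int D)) y0))))"
      unfolding vj_def pt_def xp_def by (rule vk_val[OF shy_Yq[OF w'(2)]])
    also have "int (j * D) + - (int i * int D) = - ((int i - int j) * int D)"
      by (simp add: algebra_simps)
    then have "w' (idx (ray (shy (int (j * D)) (shy (- (int i * int D)) y0)))) = w' (xp ((int i - int j) * int D))"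
      unfolding xp_def by simp
    finally show ?thesis .
  qed
  have dia: "vj i (pt i) = a" for i unfolding vj_pt xp_def a_def by simp
  have off: "cmod (vj j (pt i)) \<le> d" if "i \<noteq> j" for i j
    unfolding vj_pt using small[of "int i - int j"] that by simp
  have inj_vj: "inj_on vj {..m}"
  proof (rule inj_onI)
    fix i j assume "i \<in> {..m}" "j \<in> {..m}" "vj i = vj j"
    show "i = j"
    proof (rule ccontr)
      assume "i \<noteq> j"
      then have "cmod (vj j (pt i)) \<le> d" by (rule off)
      then show False using \<open>vj i = vj j\<close> dia[of i] dla by simp
    qed
  qed
  define T where "T = vj ` {..m}"
  have cardT: "card T = m + 1" unfolding T_def using card_image[OF inj_vj] by simp
  have Tspan: "T \<subseteq> fvs.span S"
    using cspan_sub_span[OF S(1)] vk_span unfolding T_def vj_def by blast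
  have indep: "\<not> fvs.dependent T"
    unfolding fvs.independent_explicit_finite_subsets
  proof (intro allI impI ballI)
    fix U u v assume U: "U \<subseteq> T" "finite U" and su: "(\<Sum>v\<in>U. (\<lambda>n. u v * v n)) = 0" and v: "v \<in> U"
    define J where "J = {j \<in> {..m}. vj j \<in> U}"
    have UJ: "U = vj ` J" using U(1) unfolding J_def T_def by blast
    have injJ: "inj_on vj J" using inj_vj unfolding J_def by (rule inj_on_subset) auto
    have sumJ: "(\<Sum>j\<in>J. u (vj j) * vj j n) = 0" for n
    proof -
      have "(\<Sum>v\<in>U. (\<lambda>n. u v * v n)) n = 0" using su by simp
      then have "(\<Sum>v\<in>U. u v * v n) = 0" by (simp add: sum_fun_app)
      then show ?thesis unfolding UJ by (simp add: sum.reindex[OF injJ])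
    qed
    have "\<forall>j\<in>J. u (vj j) = 0"
      by (rule diag_indep[where m = m and vj = vj and pt = pt and d = d and a = a])
         (use J_def sumJ off dia da a0 d0 in auto)
    then show "u v = 0" using v UJ by auto
  qed
  have "finite T \<and> card T \<le> card S" by (rule fvs.independent_span_bound[OF S(1) indep Tspan])
  then show False using cardT unfolding m_def by simp
qed

end

theorem proposition4p5:
  fixes F :: "('f, 'c) monoid_scheme" and \<phi> :: "'f \<Rightarrow> nat \<Rightarrow> nat" and q :: nat
  assumes "group F" and "finite (carrier F)" and "q \<ge> 2"
    and "faithful_action F {..<q} \<phi>"
    and "transitive_action F {..<q} \<phi>"
  shows "\<not> property_HFD (DA q F \<phi>)"
proof -
  have ga: "group_action F {..<q} \<phi>" using assms(4) by (rule faithful_action.axioms(1))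
  have bijp: "\<forall>g\<in>carrier F. bij_betw (\<phi> g) {..<q} {..<q}"
    using group_action.bij_prop0[OF ga] unfolding Bij_def by blast
  interpret ds: dasetup q F \<phi> by unfold_locales (use bijp assms(3) in auto)
  obtain g1 where g1: "g1 \<in> carrier F" "\<phi> g1 0 = 1"
    using transitive_action.unique_orbit[OF assms(5), of 0 1] assms(3) by auto
  have "unitary_rep (DA q F \<phi>) ds.piR" by (rule ds.unitary_rep_piR)
  moreover have "nonzero_reduced_H1 (DA q F \<phi>) ds.piR"
    unfolding nonzero_reduced_H1_def using ds.cocycle_bco ds.not_closure by blast
  moreover have "\<not> has_fd_subrep (DA q F \<phi>) ds.piR"
    unfolding has_fd_subrep_def using ds.no_fd[OF g1] by blast
  ultimately show ?thesis unfolding property_HFD_def by blast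
qed

end
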